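(* Let $\Gamma_1$ and $\Gamma_2$ be signed graphs whose signed subdivision graphs $S(\Gamma_1)$ and $S(\Gamma_2)$ are noncospectral and equienergetic. Let $p$ be a positive integer and $k\in\{p,p-1\}$. Then (i) $S_p(\Gamma_1)$ and $S_p(\Gamma_2)$ are noncospectral and equienergetic; (ii) $S_p^k(\Gamma_1)$ and $S_p^k(\Gamma_2)$ are noncospectral and equienergetic.
   Context: A signed graph $\Gamma=(G,\sigma)$ is a simple graph $G$ with a sign function $\sigma:E(G)\to\{1,-1\}$; $A(\Gamma)$ has $(i,j)$ entry $\sigma(v_iv_j)$ if $v_iv_j\in E(G)$ and $0$ otherwise. The energy of a signed graph is the sum of the absolute values of its adjacency eigenvalues; two signed graphs are equienergetic if they have equal energy, and noncospectral if their adjacency spectra (with multiplicities) differ. Orientation: fix $\vartheta(v,e)\in\{1,-1\}$ for each vertex $v$ incident with edge $e$, such that for every edge $e=vw$, $\vartheta(v,e)\vartheta(w,e)=-\sigma(e)$. $S_p(\Gamma)$ ($p\ge1$): vertex set $V(G)\cup\{e_j^{(t)}:1\le j\le m,1\le t\le p\}$, edges exactly $v\,e_j^{(t)}$ for $v$ an end of $e_j$, with sign $\vartheta(v,e_j)$; $S(\Gamma)=S_1(\Gamma)$ is the signed subdivision graph. $S_p^k(\Gamma)$: vertex set $\{v_i^{(s)}:1\le i\le n,0\le s\le p\}\cup\{e_j^{(t)}:1\le j\le m,0\le t\le k\}$, edges exactly $v_i^{(s)}e_j^{(t)}$ for $v_i$ an end of $e_j$, with sign $\vartheta(v_i,e_j)$.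 *)

theory Defs
  imports "HOL-Computational_Algebra.Computational_Algebra" "Jordan_Normal_Form.Char_Poly"
begin

(* A signed graph Gamma = (G, sigma) on vertex set {0..<n} with m edges.
   Edge j (j < m) has end vertices fst (ed j) and snd (ed j); sg j is its sign.
   th i j = theta(v_i, e_j) is the orientation value of vertex i on edge j. *)

definition incident :: "(nat \<Rightarrow> nat \<times> nat) \<Rightarrow> nat \<Rightarrow> nat \<Rightarrow> bool" where
  "incident ed i j \<longleftrightarrow> i = fst (ed j) \<or> i = snd (ed j)"

definition signed_graph :: "nat \<Rightarrow> nat \<Rightarrow> (nat \<Rightarrow> nat \<times> nat) \<Rightarrow> (nat \<Rightarrow> int) \<Rightarrow> bool" where
  "signed_graph n m ed sg \<longleftrightarrow>
     (\<forall>j<m. fst (ed j) < n \<and> snd (ed j) < n \<and> fst (ed j) \<noteq> snd (ed j) \<and> sg j \<in> {1, -1}) \<and>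
     (\<forall>j<m. \<forall>j'<m. j \<noteq> j' \<longrightarrow> {fst (ed j), snd (ed j)} \<noteq> {fst (ed j'), snd (ed j')})"

definition orientation :: "nat \<Rightarrow> (nat \<Rightarrow> nat \<times> nat) \<Rightarrow> (nat \<Rightarrow> int) \<Rightarrow> (nat \<Rightarrow> nat \<Rightarrow> int) \<Rightarrow> bool" where
  "orientation m ed sg th \<longleftrightarrow>
     (\<forall>j<m. th (fst (ed j)) j \<in> {1, -1} \<and> th (snd (ed j)) j \<in> {1, -1} \<and>
            th (fst (ed j)) j * th (snd (ed j)) j = - sg j)"

(* Adjacency matrix of S_p(Gamma): vertices v_i at index i (i < n),
   e_j^(t) (1 <= t <= p) at index n + (t-1)*m + j. *)
definition Sp_adj :: "nat \<Rightarrow> nat \<Rightarrow> (nat \<Rightarrow> nat \<times> nat) \<Rightarrow> (nat \<Rightarrow> nat \<Rightarrow> int) \<Rightarrow> nat \<Rightarrow> real mat" where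
  "Sp_adj n m ed th p = mat (n + p * m) (n + p * m) (\<lambda>(a, b).
     if a < n \<and> n \<le> b \<and> incident ed a ((b - n) mod m) then real_of_int (th a ((b - n) mod m))
     else if b < n \<and> n \<le> a \<and> incident ed b ((a - n) mod m) then real_of_int (th b ((a - n) mod m))
     else 0)"

definition S_adj :: "nat \<Rightarrow> nat \<Rightarrow> (nat \<Rightarrow> nat \<times> nat) \<Rightarrow> (nat \<Rightarrow> nat \<Rightarrow> int) \<Rightarrow> real mat" where
  "S_adj n m ed th = Sp_adj n m ed th 1"

(* Adjacency matrix of S_p^k(Gamma): v_i^(s) (0 <= s <= p) at index s*n + i,
   e_j^(t) (0 <= t <= k) at index (p+1)*n + t*m + j. *)
definition Spk_adj :: "nat \<Rightarrow> nat \<Rightarrow> (nat \<Rightarrow> nat \<times> nat) \<Rightarrow> (nat \<Rightarrow> nat \<Rightarrow> int) \<Rightarrow> nat \<Rightarrow> nat \<Rightarrow> real mat" where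
  "Spk_adj n m ed th p k = (let N = (p + 1) * n in
     mat (N + (k + 1) * m) (N + (k + 1) * m) (\<lambda>(a, b).
     if a < N \<and> N \<le> b \<and> incident ed (a mod n) ((b - N) mod m) then real_of_int (th (a mod n) ((b - N) mod m))
     else if b < N \<and> N \<le> a \<and> incident ed (b mod n) ((a - N) mod m) then real_of_int (th (b mod n) ((a - N) mod m))
     else 0))"

definition spectrum_mset :: "real mat \<Rightarrow> complex multiset" where
  "spectrum_mset A = proots (char_poly (map_mat complex_of_real A))"

definition energy :: "real mat \<Rightarrow> real" where
  "energy A = (\<Sum>x\<in>#spectrum_mset A. cmod x)"

definition cospectral :: "real mat \<Rightarrow> real mat \<Rightarrow> bool" where
  "cospectral A B \<longleftrightarrow> spectrum_mset A = spectrum_mset B"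

definition equienergetic :: "real mat \<Rightarrow> real mat \<Rightarrow> bool" where
  "equienergetic A B \<longleftrightarrow> energy A = energy B"

end

theory Submission
  imports Defs "Jordan_Normal_Form.Schur_Decomposition"
begin


lemma cp_poly: fixes A :: "complex mat" assumes A: "A \<in> carrier_mat n n"
  shows "poly (char_poly A) x = det (x \<cdot>\<^sub>m 1\<^sub>m n - A)"
proof -
  have "- char_matrix A x = x \<cdot>\<^sub>m 1\<^sub>m n - A"
    using A by (intro eq_matI) (auto simp: char_matrix_def)
  thus ?thesis using char_poly_matrix[OF A, of x] by simp
qed

lemma sylv: fixes X Y :: "complex mat" assumes X: "X \<in> carrier_mat N M" and Y: "Y \<in> carrier_mat M N"
  shows "x^M * det (x \<cdot>\<^sub>m 1\<^sub>m N - X*Y) = x^N * det (x \<cdot>\<^sub>m 1\<^sub>m M - Y*X)"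
proof -
  define L where "L = four_block_mat (x \<cdot>\<^sub>m 1\<^sub>m N) (-X) (0\<^sub>m M N) (1\<^sub>m M)"
  define Q where "Q = four_block_mat (1\<^sub>m N) X Y (x \<cdot>\<^sub>m 1\<^sub>m M)"
  define R where "R = four_block_mat (1\<^sub>m N) (0\<^sub>m N M) (-Y) (1\<^sub>m M)"
  have cL: "L \<in> carrier_mat (N+M) (N+M)" unfolding L_def using X by auto
  have cQ: "Q \<in> carrier_mat (N+M) (N+M)" unfolding Q_def using X Y by auto
  have cR: "R \<in> carrier_mat (N+M) (N+M)" unfolding R_def using Y by auto
  have LQ: "L * Q = four_block_mat (x \<cdot>\<^sub>m 1\<^sub>m N - X*Y) (0\<^sub>m N M) Y (x \<cdot>\<^sub>m 1\<^sub>m M)"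
    unfolding L_def Q_def
    apply (subst mult_four_block_mat)
    using X Y by (auto simp: mult_smult_assoc_mat[of _ N N] mult_smult_distrib[of _ N M] mult_smult_assoc_mat[of _ M M] mult_smult_distrib[of _ M N] add_uminus_minus_mat[of _ N N] add_uminus_minus_mat[of _ N M] add_uminus_minus_mat[of _ M N] add_uminus_minus_mat[of _ M M])
  have RQ: "R * Q = four_block_mat (1\<^sub>m N) X (0\<^sub>m M N) (x \<cdot>\<^sub>m 1\<^sub>m M - Y*X)"
    unfolding R_def Q_def
    apply (subst mult_four_block_mat)
    using X Y by (auto simp: mult_smult_assoc_mat[of _ N N] mult_smult_distrib[of _ N M] mult_smult_assoc_mat[of _ M M] mult_smult_distrib[of _ M N] add_uminus_minus_mat[of _ N N] add_uminus_minus_mat[of _ N M] add_uminus_minus_mat[of _ M N] add_uminus_minus_mat[of _ M M])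
  have dL: "det L = x^N" unfolding L_def
    by (subst det_four_block_mat_lower_left_zero[of _ N _ M]) (use X in auto)
  have dR: "det R = 1" unfolding R_def
    by (subst det_four_block_mat_upper_right_zero[of _ N _ M]) (use Y in auto)
  have dLQ: "det (L*Q) = det (x \<cdot>\<^sub>m 1\<^sub>m N - X*Y) * x^M" unfolding LQ
    by (subst det_four_block_mat_upper_right_zero[of _ N _ M]) (use X Y in auto)
  have dRQ: "det (R*Q) = det (x \<cdot>\<^sub>m 1\<^sub>m M - Y*X)" unfolding RQ
    by (subst det_four_block_mat_lower_left_zero[of _ N _ M]) (use X Y in auto)
  have "det (L*Q) = det L * det Q" by (rule det_mult[OF cL cQ])
  moreover have "det (R*Q) = det R * det Q" by (rule det_mult[OF cR cQ])
  ultimately show ?thesis using dL dR dLQ dRQ by (simp add: mult.commute)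
qed

lemma cp_monic: fixes A :: "complex mat" assumes A: "A \<in> carrier_mat n n"
  shows "char_poly A \<noteq> 0" "lead_coeff (char_poly A) = 1" "degree (char_poly A) = n"
    "size (proots (char_poly A)) = n"
  using degree_monic_char_poly[OF A] by (auto simp: size_proots_complex)

lemma sylv_proots: fixes X Y :: "complex mat" assumes X: "X \<in> carrier_mat N M" and Y: "Y \<in> carrier_mat M N"
  shows "proots (char_poly (X*Y)) + replicate_mset M 0 = proots (char_poly (Y*X)) + replicate_mset N 0"
proof -
  have XY: "X*Y \<in> carrier_mat N N" and YX: "Y*X \<in> carrier_mat M M" using X Y by auto
  have "monom 1 M * char_poly (X*Y) = monom 1 N * char_poly (Y*X)"
  proof (rule poly_eq_poly_eq_iff[THEN iffD1], rule ext)
    fix x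
    show "poly (monom 1 M * char_poly (X*Y)) x = poly (monom 1 N * char_poly (Y*X)) x"
      using sylv[OF X Y, of x] by (simp add: poly_monom cp_poly[OF XY] cp_poly[OF YX])
  qed
  hence "proots (monom 1 M * char_poly (X*Y)) = proots (monom 1 N * char_poly (Y*X))" by simp
  moreover have "proots (monom (1::complex) K) = replicate_mset K 0" for K
    by (simp add: monom_altdef proots_power)
  ultimately show ?thesis using cp_monic(1)[OF XY] cp_monic(1)[OF YX]
    by (simp add: proots_mult monom_eq_0_iff add.commute)
qed

lemma prod_mset_scale: "c ^ size P * (\<Prod>a\<in>#P. f a) = (\<Prod>a\<in>#P. c * f a)" for c :: complex
  by (induction P) (auto simp: algebra_simps)

lemma proots_lin_prod: "proots (\<Prod>a\<in>#P. [:- (c * a), 1:]) = image_mset ((*) c) (P :: complex multiset)"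
proof (induction P)
  case (add x P)
  have "(\<Prod>a\<in>#P. [:- (c * a), 1:]) \<noteq> 0" by (auto simp: prod_mset_zero_iff)
  hence "proots ([:- (c * x), 1:] * (\<Prod>a\<in>#P. [:- (c * a), 1:])) = proots [:- (c * x), 1:] + proots (\<Prod>a\<in>#P. [:- (c * a), 1:])"
    by (intro proots_mult) auto
  with add show ?case by (simp del: mult_pCons_left)
qed simp

lemma proots_cp_smult: fixes A :: "complex mat" assumes A: "A \<in> carrier_mat n n" and c: "c \<noteq> 0"
  shows "proots (char_poly (c \<cdot>\<^sub>m A)) = image_mset ((*) c) (proots (char_poly A))"
proof -
  define P where "P = proots (char_poly A)"
  have sz: "size P = n" unfolding P_def using cp_monic[OF A] by simp
  have dec: "char_poly A = (\<Prod>a\<in>#P. [:- a, 1:])"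
    using complex_poly_decompose_multiset[of "char_poly A"] cp_monic[OF A] unfolding P_def by simp
  have cA: "c \<cdot>\<^sub>m A \<in> carrier_mat n n" using A by simp
  have "char_poly (c \<cdot>\<^sub>m A) = (\<Prod>a\<in>#P. [:- (c * a), 1:])"
  proof (rule poly_eq_poly_eq_iff[THEN iffD1], rule ext)
    fix x
    have "x \<cdot>\<^sub>m 1\<^sub>m n - c \<cdot>\<^sub>m A = c \<cdot>\<^sub>m ((x / c) \<cdot>\<^sub>m 1\<^sub>m n - A)"
      using A c by (intro eq_matI) (auto simp: algebra_simps)
    hence "poly (char_poly (c \<cdot>\<^sub>m A)) x = c ^ n * poly (char_poly A) (x / c)"
      using A by (simp add: cp_poly[OF cA] cp_poly[OF A])
    also have "\<dots> = (\<Prod>a\<in>#P. c * (x / c - a))"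
      unfolding dec sz[symmetric] prod_mset_scale poly_prod_mset by (simp add: multiset.map_comp comp_def)
    also have "\<dots> = poly (\<Prod>a\<in>#P. [:- (c * a), 1:]) x"
      using c by (simp add: poly_prod_mset multiset.map_comp comp_def algebra_simps)
    finally show "poly (char_poly (c \<cdot>\<^sub>m A)) x = poly (\<Prod>a\<in>#P. [:- (c * a), 1:]) x" .
  qed
  thus ?thesis by (simp add: proots_lin_prod P_def)
qed



definition mtr :: "'a::comm_ring_1 mat \<Rightarrow> 'a" where "mtr M = (\<Sum>i<dim_row M. M $$ (i,i))"

lemma mtr_comm: fixes X Y :: "'a::comm_ring_1 mat"
  assumes X: "X \<in> carrier_mat n m" and Y: "Y \<in> carrier_mat m n"
  shows "mtr (X*Y) = mtr (Y*X)"
proof -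
  have "mtr (X*Y) = (\<Sum>i<n. \<Sum>j<m. X $$ (i,j) * Y $$ (j,i))"
    using X Y by (simp add: mtr_def scalar_prod_def atLeast0LessThan)
  also have "\<dots> = (\<Sum>j<m. \<Sum>i<n. Y $$ (j,i) * X $$ (i,j))"
    by (subst sum.swap) (simp add: mult.commute)
  also have "\<dots> = mtr (Y*X)"
    using X Y by (simp add: mtr_def scalar_prod_def atLeast0LessThan)
  finally show ?thesis .
qed

lemma proots_lin_list: "proots (\<Prod>a\<leftarrow>xs. [:- a, 1:]) = mset (xs :: complex list)"
proof (induction xs)
  case (Cons x xs)
  have "(\<Prod>a\<leftarrow>xs. [:- a, 1:]) \<noteq> 0" by (auto simp: prod_list_zero_iff)
  hence "proots ([:- x, 1:] * (\<Prod>a\<leftarrow>xs. [:- a, 1:])) = proots [:- x, 1:] + proots (\<Prod>a\<leftarrow>xs. [:- a, 1:])"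
    by (intro proots_mult) auto
  with Cons show ?case by (simp del: mult_pCons_left)
qed simp

lemma sum_sq_eigen: fixes A :: "complex mat" assumes A: "A \<in> carrier_mat n n"
  shows "(\<Sum>z\<in>#proots (char_poly A). z^2) = mtr (A*A)"
proof -
  obtain as where as: "char_poly A = (\<Prod>a\<leftarrow>as. [:- a, 1:])"
    using char_poly_factorized[OF A] by blast
  obtain B where B: "B \<in> carrier_mat n n" "upper_triangular B" "similar_mat A B"
    using schur_decomposition_exists[OF A as] by blast
  have cpB: "char_poly A = (\<Prod>a\<leftarrow>diag_mat B. [:- a, 1:])"
    using char_poly_similar[OF B(3)] char_poly_upper_triangular[OF B(1,2)] by simp
  have pr: "proots (char_poly A) = mset (diag_mat B)"
    unfolding cpB by (rule proots_lin_list)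
  obtain P Q where W: "similar_mat_wit A B P Q" using B(3) unfolding similar_mat_def by blast
  have PQ: "P \<in> carrier_mat n n" "Q \<in> carrier_mat n n" "Q * P = 1\<^sub>m n"
    using W A unfolding similar_mat_wit_def Let_def by auto
  have ut: "\<And>i j. i < n \<Longrightarrow> j < i \<Longrightarrow> B $$ (i,j) = 0"
    using B(1,2) unfolding upper_triangular_def by auto
  have sq: "M ^\<^sub>m 2 = M * M" if "M \<in> carrier_mat n n" for M :: "complex mat"
    using that by (simp add: numeral_2_eq_2)
  have "A * A = P * (B * B) * Q" using similar_mat_wit_pow_id[OF W, of 2] sq[OF A] sq[OF B(1)] by simp
  hence "mtr (A*A) = mtr (P * (B * B) * Q)" by simp
  also have "\<dots> = mtr (Q * (P * (B * B)))"
    by (rule mtr_comm[of _ n n]) (use PQ B(1) in auto)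
  also have "Q * (P * (B * B)) = (Q * P) * (B * B)"
    by (rule assoc_mult_mat[symmetric, of _ n n _ n _ n]) (use PQ B(1) in auto)
  also have "\<dots> = B * B" using PQ B(1) by simp
  finally have "mtr (A*A) = mtr (B*B)" .
  also have "mtr (B*B) = (\<Sum>i<n. B $$ (i,i) ^ 2)"
    unfolding mtr_def
  proof (rule sum.cong)
    fix i assume i: "i \<in> {..<n}"
    hence i: "i < n" using B by simp
    have "(B*B) $$ (i,i) = (\<Sum>j<n. B $$ (i,j) * B $$ (j,i))"
      using B i by (simp add: scalar_prod_def atLeast0LessThan)
    also have "\<dots> = (\<Sum>j<n. if j = i then B $$ (i,i) ^ 2 else 0)"
    proof (intro sum.cong refl)
      fix j assume j: "j \<in> {..<n}"
      show "B $$ (i,j) * B $$ (j,i) = (if j = i then B $$ (i,i) ^ 2 else 0)"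
      proof (cases "j < i")
        case True thus ?thesis using ut[OF i True] by simp
      next
        case False
        show ?thesis
        proof (cases "j = i")
          case True thus ?thesis by (simp add: power2_eq_square)
        next
          case ne: False
          with False have "i < j" by simp
          thus ?thesis using ut[of j i] j by simp
        qed
      qed
    qed
    also have "\<dots> = B $$ (i,i) ^ 2" using i by simp
    finally show "(B*B) $$ (i,i) = B $$ (i,i) ^ 2" .
  qed (use B in auto)
  also have "\<dots> = (\<Sum>z\<in>#mset (diag_mat B). z^2)"
  proof -
    have "(\<Sum>z\<in>#mset (diag_mat B). z^2) = sum_list (map (\<lambda>z. z^2) (diag_mat B))"
      by (simp only: sum_mset_sum_list mset_map[symmetric])
    also have "\<dots> = sum_list (map (\<lambda>i. B $$ (i,i) ^ 2) [0..<n])"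
      using B(1) by (simp add: diag_mat_def comp_def)
    also have "\<dots> = (\<Sum>i<n. B $$ (i,i) ^ 2)"
      by (simp add: interv_sum_list_conv_sum_set_nat atLeast0LessThan)
    finally show ?thesis by simp
  qed
  finally show ?thesis unfolding pr by simp
qed



lemma mult_mat_entry: "i < nr \<Longrightarrow> j < nc \<Longrightarrow>
  (mat nr n f * mat n nc g) $$ (i,j) = (\<Sum>l<n. f (i,l) * g (l,j))"
  by (simp add: scalar_prod_def atLeast0LessThan)

lemma card_mod_class: assumes "j < m" shows "card {i. i < q * m \<and> i mod m = j} = q"
proof (induction q)
  case 0 thus ?case by simp
next
  case (Suc q)
  have "{i. i < Suc q * m \<and> i mod m = j} = insert (q * m + j) {i. i < q * m \<and> i mod m = j}"
  proof (intro equalityI subsetI)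
    fix i assume i: "i \<in> {i. i < Suc q * m \<and> i mod m = j}"
    show "i \<in> insert (q * m + j) {i. i < q * m \<and> i mod m = j}"
    proof (cases "i < q * m")
      case False
      define r where "r = i - q * m"
      have ir: "i = q * m + r" "r < m" using False i unfolding r_def by auto
      have "i mod m = r" using ir by simp
      hence "i = q * m + j" using i ir by simp
      thus ?thesis by simp
    qed (use i in auto)
  next
    fix i assume "i \<in> insert (q * m + j) {i. i < q * m \<and> i mod m = j}"
    thus "i \<in> {i. i < Suc q * m \<and> i mod m = j}" using assms by auto
  qed
  moreover have "q * m + j \<notin> {i. i < q * m \<and> i mod m = j}" by simp
  ultimately show ?case using Suc by simp
qed


definition Xm :: "nat \<Rightarrow> nat \<Rightarrow> nat \<Rightarrow> nat \<Rightarrow> complex \<Rightarrow> complex mat" where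
  "Xm n m p k \<sigma> = mat ((p+1)*n + (k+1)*m) (n+m) (\<lambda>(a,b).
     if b = (if a < (p+1)*n then a mod n else n + (a - (p+1)*n) mod m)
     then (if a < (p+1)*n then \<sigma> else 1) else 0)"

definition Ym :: "nat \<Rightarrow> nat \<Rightarrow> (nat \<Rightarrow> nat \<times> nat) \<Rightarrow> (nat \<Rightarrow> nat \<Rightarrow> int) \<Rightarrow> nat \<Rightarrow> nat \<Rightarrow> complex \<Rightarrow> complex mat" where
  "Ym n m ed th p k t = mat (n+m) ((p+1)*n + (k+1)*m) (\<lambda>(a,b).
     if a < n \<and> (p+1)*n \<le> b \<and> incident ed a ((b - (p+1)*n) mod m) then t * of_int (th a ((b - (p+1)*n) mod m))
     else if n \<le> a \<and> b < (p+1)*n \<and> incident ed (b mod n) (a - n) then of_int (th (b mod n) (a - n)) else 0)"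

lemma XY: assumes st: "\<sigma> * t = 1"
  shows "Xm n m p k \<sigma> * Ym n m ed th p k t = map_mat complex_of_real (Spk_adj n m ed th p k)"
proof (rule eq_matI)
  let ?N = "(p+1)*n" and ?K = "(k+1)*m"
  show "dim_row (Xm n m p k \<sigma> * Ym n m ed th p k t) = dim_row (map_mat complex_of_real (Spk_adj n m ed th p k))"
    by (simp add: Xm_def Spk_adj_def Let_def)
  show "dim_col (Xm n m p k \<sigma> * Ym n m ed th p k t) = dim_col (map_mat complex_of_real (Spk_adj n m ed th p k))"
    by (simp add: Ym_def Spk_adj_def Let_def)
  fix a b assume a: "a < dim_row (map_mat complex_of_real (Spk_adj n m ed th p k))"
    and b: "b < dim_col (map_mat complex_of_real (Spk_adj n m ed th p k))"
  hence a: "a < ?N + ?K" and b: "b < ?N + ?K" by (auto simp: Spk_adj_def Let_def)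
  define l0 where "l0 = (if a < ?N then a mod n else n + (a - ?N) mod m)"
  define xv where "xv = (if a < ?N then \<sigma> else 1)"
  define g where "g = (\<lambda>(a,b). if a < n \<and> (p+1)*n \<le> b \<and> incident ed a ((b - (p+1)*n) mod m) then t * of_int (th a ((b - (p+1)*n) mod m))
     else if n \<le> a \<and> b < (p+1)*n \<and> incident ed (b mod n) (a - n) then of_int (th (b mod n) (a - n)) else (0::complex))"
  have l0: "l0 < n + m"
  proof (cases "a < ?N")
    case True hence "n > 0" by (cases n) auto
    hence "a mod n < n" by simp
    thus ?thesis using True by (simp add: l0_def)
  next
    case False hence "m > 0" using a by (cases m) auto
    thus ?thesis using False by (simp add: l0_def)
  qed
  have "(Xm n m p k \<sigma> * Ym n m ed th p k t) $$ (a,b) = (\<Sum>l<n+m. (if l = l0 then xv else 0) * g (l,b))"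
    unfolding Xm_def Ym_def g_def l0_def xv_def using a b by (subst mult_mat_entry) auto
  also have "\<dots> = (\<Sum>l<n+m. if l = l0 then xv * g (l0,b) else 0)"
    by (intro sum.cong) auto
  also have "\<dots> = xv * g (l0, b)" using l0 by simp
  also have "\<dots> = map_mat complex_of_real (Spk_adj n m ed th p k) $$ (a,b)"
  proof (cases "a < ?N")
    case True
    hence "n > 0" by (cases n) auto
    hence "l0 < n" using True by (simp add: l0_def)
    thus ?thesis using True a b st by (simp add: l0_def xv_def g_def Spk_adj_def Let_def)
  next
    case False
    thus ?thesis using a b st by (simp add: l0_def xv_def g_def Spk_adj_def Let_def)
  qed
  finally show "(Xm n m p k \<sigma> * Ym n m ed th p k t) $$ (a,b) = map_mat complex_of_real (Spk_adj n m ed th p k) $$ (a,b)" .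
qed


lemma sum_if_card: "(\<Sum>l<(T::nat). if P l then v else 0) = of_nat (card {l. l<T \<and> P l}) * (v::complex)"
proof -
  have "(\<Sum>l\<in>{l\<in>{..<T}. P l}. v) = (\<Sum>l<T. if P l then v else 0)" by (rule sum.inter_filter) simp
  moreover have "{l\<in>{..<T}. P l} = {l. l<T \<and> P l}" by auto
  ultimately show ?thesis by simp
qed

lemma card_shift: assumes "j < m"
  shows "card {l. l < N + q*m \<and> N \<le> l \<and> (l - N) mod m = j} = q"
proof -
  have "{l. l < N + q*m \<and> N \<le> l \<and> (l - N) mod m = j} = (\<lambda>i. N + i) ` {i. i < q * m \<and> i mod m = j}"
  proof (intro equalityI subsetI)
    fix l assume "l \<in> {l. l < N + q*m \<and> N \<le> l \<and> (l - N) mod m = j}"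
    hence "l - N \<in> {i. i < q * m \<and> i mod m = j}" "l = N + (l - N)" by auto
    thus "l \<in> (\<lambda>i. N + i) ` {i. i < q * m \<and> i mod m = j}" by blast
  qed auto
  also have "card \<dots> = card {i. i < q * m \<and> i mod m = j}" by (rule card_image) (auto simp: inj_on_def)
  finally show ?thesis using card_mod_class[OF assms] by simp
qed

lemma YX: assumes c1: "c = of_nat (k+1) * t" and c2: "c = of_nat (p+1) * \<sigma>"
  shows "Ym n m ed th p k t * Xm n m p k \<sigma> = c \<cdot>\<^sub>m map_mat complex_of_real (Spk_adj n m ed th 0 0)"
proof (rule eq_matI)
  let ?N = "(p+1)*n" and ?K = "(k+1)*m"
  show "dim_row (Ym n m ed th p k t * Xm n m p k \<sigma>) = dim_row (c \<cdot>\<^sub>m map_mat complex_of_real (Spk_adj n m ed th 0 0))"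
    by (simp add: Ym_def Spk_adj_def Let_def)
  show "dim_col (Ym n m ed th p k t * Xm n m p k \<sigma>) = dim_col (c \<cdot>\<^sub>m map_mat complex_of_real (Spk_adj n m ed th 0 0))"
    by (simp add: Xm_def Spk_adj_def Let_def)
  fix a b assume a: "a < dim_row (c \<cdot>\<^sub>m map_mat complex_of_real (Spk_adj n m ed th 0 0))"
    and b: "b < dim_col (c \<cdot>\<^sub>m map_mat complex_of_real (Spk_adj n m ed th 0 0))"
  hence a: "a < n + m" and b: "b < n + m" by (auto simp: Spk_adj_def Let_def)
  define Yf where "Yf = (\<lambda>(a,b). if a < n \<and> (p+1)*n \<le> b \<and> incident ed a ((b - (p+1)*n) mod m) then t * of_int (th a ((b - (p+1)*n) mod m))
     else if n \<le> a \<and> b < (p+1)*n \<and> incident ed (b mod n) (a - n) then of_int (th (b mod n) (a - n)) else (0::complex))"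
  define Xf where "Xf = (\<lambda>(a,b). if b = (if a < (p+1)*n then a mod n else n + (a - (p+1)*n) mod m)
     then (if a < (p+1)*n then \<sigma> else (1::complex)) else 0)"
  have "(Ym n m ed th p k t * Xm n m p k \<sigma>) $$ (a,b) = (\<Sum>l<?N+?K. Yf (a,l) * Xf (l,b))"
    unfolding Xm_def Ym_def Yf_def Xf_def using a b by (subst mult_mat_entry) auto
  also have "\<dots> = (c \<cdot>\<^sub>m map_mat complex_of_real (Spk_adj n m ed th 0 0)) $$ (a,b)"
  proof (cases "a < n")
    case an: True
    show ?thesis
    proof (cases "b < n")
      case bn: True
      have "(\<Sum>l<?N+?K. Yf (a,l) * Xf (l,b)) = (\<Sum>l<?N+?K. 0)"
        using an bn by (intro sum.cong) (auto simp: Yf_def Xf_def)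
      thus ?thesis using a b an bn by (simp add: Spk_adj_def Let_def)
    next
      case bn: False
      define w where "w = (if incident ed a (b - n) then t * of_int (th a (b - n)) else (0::complex))"
      have "(\<Sum>l<?N+?K. Yf (a,l) * Xf (l,b)) = (\<Sum>l<?N+?K. if ?N \<le> l \<and> (l - ?N) mod m = b - n then w else 0)"
        using an bn by (intro sum.cong) (auto simp: Yf_def Xf_def w_def)
      also have "\<dots> = of_nat (k+1) * w"
        unfolding sum_if_card using card_shift[of "b - n" m ?N "k+1"] bn b by simp
      finally show ?thesis using a b an bn c1 by (simp add: Spk_adj_def Let_def w_def)
    qed
  next
    case an: False
    show ?thesis
    proof (cases "b < n")
      case bn: False
      have xm: "\<And>x. x < n + p * n \<Longrightarrow> x mod n < n"
        by (case_tac "n = 0") auto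
      have "(\<Sum>l<?N+?K. Yf (a,l) * Xf (l,b)) = (\<Sum>l<?N+?K. 0)"
        using an bn xm by (intro sum.cong) (auto simp: Yf_def Xf_def)
      thus ?thesis using a b an bn by (simp add: Spk_adj_def Let_def)
    next
      case bn: True
      have "0 < n" using bn by simp
      define w where "w = (if incident ed b (a - n) then \<sigma> * of_int (th b (a - n)) else (0::complex))"
      have "(\<Sum>l<?N+?K. Yf (a,l) * Xf (l,b)) = (\<Sum>l<?N+?K. if l < ?N \<and> l mod n = b then w else 0)"
        using an bn \<open>0 < n\<close> by (intro sum.cong) (auto simp: Yf_def Xf_def w_def)
      also have "\<dots> = of_nat (p+1) * w"
      proof -
        have "{l. l < ?N + ?K \<and> (l < ?N \<and> l mod n = b)} = {l. l < (p+1)*n \<and> l mod n = b}" by auto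
        thus ?thesis unfolding sum_if_card using card_mod_class[of b n "p+1"] bn by simp
      qed
      finally show ?thesis using a b an bn c2 by (simp add: Spk_adj_def Let_def w_def)
    qed
  qed
  finally show "(Ym n m ed th p k t * Xm n m p k \<sigma>) $$ (a,b) = (c \<cdot>\<^sub>m map_mat complex_of_real (Spk_adj n m ed th 0 0)) $$ (a,b)" .
qed




lemma sum_split: "(\<Sum>x<n+m. f x) = (\<Sum>x<n. f x) + (\<Sum>j<m. f (n + j))" for f :: "nat \<Rightarrow> complex"
  by (induction m) (auto simp: add.assoc)

lemma S_entry_sq:
  assumes O: "orientation m ed sg th" and G: "signed_graph n m ed sg"
    and a: "a < n + m" and b: "b < n + m"
  defines "A \<equiv> map_mat complex_of_real (Spk_adj n m ed th 0 0)"
  shows "A $$ (a,b) * A $$ (b,a) = (if a < n \<and> n \<le> b \<and> incident ed a (b - n) then 1 else 0)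
     + (if b < n \<and> n \<le> a \<and> incident ed b (a - n) then 1 else 0)"
proof -
  have th: "th i j * th i j = 1" if "j < m" "incident ed i j" for i j
    using O that unfolding orientation_def incident_def by (auto)
  have "A $$ (a,b) = (if a < n \<and> n \<le> b \<and> incident ed a (b - n) then of_int (th a (b - n))
      else if b < n \<and> n \<le> a \<and> incident ed b (a - n) then of_int (th b (a - n)) else 0)"
    using a b unfolding A_def Spk_adj_def Let_def by auto
  moreover have "A $$ (b,a) = (if b < n \<and> n \<le> a \<and> incident ed b (a - n) then of_int (th b (a - n))
      else if a < n \<and> n \<le> b \<and> incident ed a (b - n) then of_int (th a (b - n)) else 0)"
    using a b unfolding A_def Spk_adj_def Let_def by auto
  ultimately show ?thesis using a b th[of "b - n" a] th[of "a - n" b]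
    by (auto simp flip: of_int_mult)
qed

lemma trace_S:
  assumes O: "orientation m ed sg th" and G: "signed_graph n m ed sg"
  defines "A \<equiv> map_mat complex_of_real (Spk_adj n m ed th 0 0)"
  shows "mtr (A * A) = 4 * of_nat m"
proof -
  define g where "g = (\<lambda>a b. if a < n \<and> n \<le> b \<and> incident ed a (b - n) then 1 else (0::complex))"
  have cA: "A \<in> carrier_mat (n+m) (n+m)" unfolding A_def Spk_adj_def Let_def by simp
  have "mtr (A * A) = (\<Sum>a<n+m. \<Sum>b<n+m. A $$ (a,b) * A $$ (b,a))"
    unfolding mtr_def using cA by (intro sum.cong) (auto simp: scalar_prod_def atLeast0LessThan)
  also have "\<dots> = (\<Sum>a<n+m. \<Sum>b<n+m. g a b + g b a)"
    unfolding A_def g_def using S_entry_sq[OF O G] by (intro sum.cong refl) auto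
  also have "\<dots> = 2 * (\<Sum>a<n+m. \<Sum>b<n+m. g a b)"
    by (simp add: sum.distrib sum.swap[of "\<lambda>a b. g b a"])
  also have "(\<Sum>a<n+m. \<Sum>b<n+m. g a b) = (\<Sum>a<n. \<Sum>j<m. if incident ed a j then 1 else 0)"
    unfolding sum_split[where n=n and m=m] by (simp add: g_def)
  also have "\<dots> = (\<Sum>j<m. \<Sum>a<n. if incident ed a j then 1 else 0)" by (rule sum.swap)
  also have "\<dots> = (\<Sum>j<m. 2)"
  proof (intro sum.cong refl)
    fix j assume j: "j \<in> {..<m}"
    have "{a. a < n \<and> incident ed a j} = {fst (ed j), snd (ed j)}"
      using G j unfolding signed_graph_def incident_def by auto
    moreover have "fst (ed j) \<noteq> snd (ed j)" using G j unfolding signed_graph_def by auto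
    ultimately show "(\<Sum>a<n. if incident ed a j then 1 else 0) = (2::complex)"
      unfolding sum_if_card by simp
  qed
  finally show ?thesis by simp
qed



lemma S_as_Spk: "S_adj n m ed th = Spk_adj n m ed th 0 0"
  unfolding S_adj_def Sp_adj_def Spk_adj_def Let_def by (intro eq_matI) auto

lemma Sp_as_Spk: assumes "1 \<le> p" shows "Sp_adj n m ed th p = Spk_adj n m ed th 0 (p - 1)"
proof -
  have pp: "p - 1 + 1 = p" using assms by simp
  show ?thesis unfolding Sp_adj_def Spk_adj_def Let_def pp by (intro eq_matI) auto
qed

lemma KEY:
  fixes n m p k :: nat
  defines "cr \<equiv> real (k+1) * sqrt (real (p+1) / real (k+1))"
  shows "cr > 0"
    "spectrum_mset (Spk_adj n m ed th p k) + replicate_mset (n+m) 0 =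
     image_mset ((*) (complex_of_real cr)) (spectrum_mset (Spk_adj n m ed th 0 0)) + replicate_mset ((p+1)*n + (k+1)*m) 0"
proof -
  show "cr > 0" unfolding cr_def by simp
  define tr where "tr = sqrt (real (p+1) / real (k+1))"
  have tr0: "tr > 0" unfolding tr_def by simp
  have trsq: "tr * tr = real (p+1) / real (k+1)" unfolding tr_def by simp
  define t where "t = complex_of_real tr"
  define \<sigma> where "\<sigma> = 1 / t"
  define c where "c = complex_of_real cr"
  have t0: "t \<noteq> 0" unfolding t_def using tr0 by simp
  have st: "\<sigma> * t = 1" unfolding \<sigma>_def using t0 by simp
  have c1: "c = of_nat (k+1) * t" unfolding c_def t_def cr_def tr_def by simp
  have c2: "c = of_nat (p+1) * \<sigma>"
  proof -
    have "real (k+1) * tr = real (p+1) / tr" using trsq tr0 by (simp add: field_simps)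
    hence "complex_of_real (real (k+1) * tr) = complex_of_real (real (p+1) / tr)" by simp
    thus ?thesis unfolding c1 \<sigma>_def t_def by simp
  qed
  have cr0: "cr > 0" unfolding cr_def by simp
  have c0: "c \<noteq> 0" using cr0 unfolding c_def by simp
  let ?N = "(p+1)*n + (k+1)*m"
  have X: "Xm n m p k \<sigma> \<in> carrier_mat ?N (n+m)" unfolding Xm_def by simp
  have Y: "Ym n m ed th p k t \<in> carrier_mat (n+m) ?N" unfolding Ym_def by simp
  have A: "map_mat complex_of_real (Spk_adj n m ed th 0 0) \<in> carrier_mat (n+m) (n+m)"
    unfolding Spk_adj_def Let_def by simp
  have "proots (char_poly (Xm n m p k \<sigma> * Ym n m ed th p k t)) + replicate_mset (n+m) 0 =
    proots (char_poly (Ym n m ed th p k t * Xm n m p k \<sigma>)) + replicate_mset ?N 0" by (rule sylv_proots[OF X Y])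
  hence "spectrum_mset (Spk_adj n m ed th p k) + replicate_mset (n+m) 0 =
     image_mset ((*) c) (spectrum_mset (Spk_adj n m ed th 0 0)) + replicate_mset ?N 0"
    unfolding XY[OF st] YX[OF c1 c2] proots_cp_smult[OF A c0] spectrum_mset_def .
  thus "spectrum_mset (Spk_adj n m ed th p k) + replicate_mset (n+m) 0 =
     image_mset ((*) (complex_of_real cr)) (spectrum_mset (Spk_adj n m ed th 0 0)) + replicate_mset ?N 0"
    unfolding c_def .
qed




lemma size_spec: "size (spectrum_mset (Spk_adj n m ed th p k)) = (p+1)*n + (k+1)*m"
proof -
  have "map_mat complex_of_real (Spk_adj n m ed th p k) \<in> carrier_mat ((p+1)*n + (k+1)*m) ((p+1)*n + (k+1)*m)"
    unfolding Spk_adj_def Let_def by simp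
  from cp_monic(4)[OF this] show ?thesis unfolding spectrum_mset_def .
qed

lemma energy_KEY:
  fixes n m p k :: nat
  defines "cr \<equiv> real (k+1) * sqrt (real (p+1) / real (k+1))"
  shows "energy (Spk_adj n m ed th p k) = cr * energy (Spk_adj n m ed th 0 0)"
proof -
  have cr0: "cr > 0" unfolding cr_def by simp
  have "(\<Sum>x\<in>#spectrum_mset (Spk_adj n m ed th p k) + replicate_mset (n+m) 0. cmod x) =
    (\<Sum>x\<in>#image_mset ((*) (complex_of_real cr)) (spectrum_mset (Spk_adj n m ed th 0 0)) + replicate_mset ((p+1)*n + (k+1)*m) 0. cmod x)"
    using KEY(2)[where k=k and p=p and n=n and m=m and ed=ed and th=th] unfolding cr_def by simp
  hence "energy (Spk_adj n m ed th p k) = (\<Sum>z\<in>#spectrum_mset (Spk_adj n m ed th 0 0). cmod (complex_of_real cr * z))"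
    unfolding energy_def by (simp add: multiset.map_comp comp_def)
  also have "\<dots> = (\<Sum>z\<in>#spectrum_mset (Spk_adj n m ed th 0 0). cr * cmod z)"
    using cr0 by (simp add: norm_mult)
  also have "\<dots> = cr * energy (Spk_adj n m ed th 0 0)"
    unfolding energy_def by (simp add: sum_mset_distrib_left multiset.map_comp comp_def)
  finally show ?thesis .
qed

lemma sumsq_spec: assumes O: "orientation m ed sg th" and G: "signed_graph n m ed sg"
  shows "(\<Sum>z\<in>#spectrum_mset (Spk_adj n m ed th 0 0). z^2) = 4 * of_nat m"
proof -
  have A: "map_mat complex_of_real (Spk_adj n m ed th 0 0) \<in> carrier_mat (n+m) (n+m)"
    unfolding Spk_adj_def Let_def by simp
  show ?thesis unfolding spectrum_mset_def sum_sq_eigen[OF A] trace_S[OF O G] ..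
qed

lemma GEN:
  assumes G1: "signed_graph n1 m1 ed1 sg1" and O1: "orientation m1 ed1 sg1 th1"
    and G2: "signed_graph n2 m2 ed2 sg2" and O2: "orientation m2 ed2 sg2 th2"
    and nc: "\<not> cospectral (Spk_adj n1 m1 ed1 th1 0 0) (Spk_adj n2 m2 ed2 th2 0 0)"
    and ee: "equienergetic (Spk_adj n1 m1 ed1 th1 0 0) (Spk_adj n2 m2 ed2 th2 0 0)"
  shows "\<not> cospectral (Spk_adj n1 m1 ed1 th1 P K) (Spk_adj n2 m2 ed2 th2 P K) \<and>
         equienergetic (Spk_adj n1 m1 ed1 th1 P K) (Spk_adj n2 m2 ed2 th2 P K)"
proof
  show "equienergetic (Spk_adj n1 m1 ed1 th1 P K) (Spk_adj n2 m2 ed2 th2 P K)"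
    using ee unfolding equienergetic_def energy_KEY[where k=K and p=P and n=n1 and m=m1 and ed=ed1 and th=th1] energy_KEY[where k=K and p=P and n=n2 and m=m2 and ed=ed2 and th=th2] by simp
  show "\<not> cospectral (Spk_adj n1 m1 ed1 th1 P K) (Spk_adj n2 m2 ed2 th2 P K)"
  proof
    assume cs: "cospectral (Spk_adj n1 m1 ed1 th1 P K) (Spk_adj n2 m2 ed2 th2 P K)"
    define cr where "cr = real (K+1) * sqrt (real (P+1) / real (K+1))"
    define c where "c = complex_of_real cr"
    have "cr > 0" using KEY(1)[where k=K and p=P] unfolding cr_def .
    hence c0: "c \<noteq> 0" unfolding c_def by simp
    define S where "S = spectrum_mset (Spk_adj n1 m1 ed1 th1 P K)"
    define D1 where "D1 = spectrum_mset (Spk_adj n1 m1 ed1 th1 0 0)"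
    define D2 where "D2 = spectrum_mset (Spk_adj n2 m2 ed2 th2 0 0)"
    have S2: "spectrum_mset (Spk_adj n2 m2 ed2 th2 P K) = S" using cs unfolding cospectral_def S_def by simp
    have K1: "S + replicate_mset (n1+m1) 0 = image_mset ((*) c) D1 + replicate_mset ((P+1)*n1 + (K+1)*m1) 0"
      using KEY(2)[where k=K and p=P and n=n1 and m=m1 and ed=ed1 and th=th1] unfolding S_def D1_def c_def cr_def .
    have K2: "S + replicate_mset (n2+m2) 0 = image_mset ((*) c) D2 + replicate_mset ((P+1)*n2 + (K+1)*m2) 0"
      using KEY(2)[where k=K and p=P and n=n2 and m=m2 and ed=ed2 and th=th2] unfolding S2[symmetric] D2_def c_def cr_def .
    have sz: "(P+1)*n1 + (K+1)*m1 = (P+1)*n2 + (K+1)*m2"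
      using size_spec[of n1 m1 ed1 th1 P K] size_spec[of n2 m2 ed2 th2 P K] S2 unfolding S_def by simp
    have "image_mset ((*) c) D1 + replicate_mset (n2+m2) 0 + replicate_mset ((P+1)*n1 + (K+1)*m1) 0
        = image_mset ((*) c) D2 + replicate_mset (n1+m1) 0 + replicate_mset ((P+1)*n1 + (K+1)*m1) 0"
    proof -
      have "image_mset ((*) c) D1 + replicate_mset (n2+m2) 0 + replicate_mset ((P+1)*n1 + (K+1)*m1) 0
          = S + replicate_mset (n1+m1) 0 + replicate_mset (n2+m2) 0"
        using K1 by (simp add: ac_simps)
      also have "\<dots> = image_mset ((*) c) D2 + replicate_mset (n1+m1) 0 + replicate_mset ((P+1)*n1 + (K+1)*m1) 0"
        using K2 sz by (simp add: ac_simps)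
      finally show ?thesis .
    qed
    hence "image_mset ((*) c) D1 + replicate_mset (n2+m2) 0 = image_mset ((*) c) D2 + replicate_mset (n1+m1) 0"
      by simp
    hence "image_mset (\<lambda>z. z / c) (image_mset ((*) c) D1 + replicate_mset (n2+m2) 0) =
           image_mset (\<lambda>z. z / c) (image_mset ((*) c) D2 + replicate_mset (n1+m1) 0)" by simp
    hence D: "D1 + replicate_mset (n2+m2) 0 = D2 + replicate_mset (n1+m1) 0"
      using c0 by (simp add: multiset.map_comp comp_def)
    have "(\<Sum>z\<in>#D1 + replicate_mset (n2+m2) 0. z^2) = (\<Sum>z\<in>#D2 + replicate_mset (n1+m1) 0. z^2)"
      unfolding D ..
    hence "(4::complex) * of_nat m1 = 4 * of_nat m2"
      using sumsq_spec[OF O1 G1] sumsq_spec[OF O2 G2] unfolding D1_def D2_def by simp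
    hence m: "m1 = m2" by simp
    with sz have "Suc P * n1 = Suc P * n2" by simp
    hence "n1 = n2" by (simp only: mult_cancel1) simp
    with m D have "D1 = D2" by simp
    with nc show False unfolding cospectral_def D1_def D2_def by simp
  qed
qed


theorem corollary4p11:
  fixes n1 m1 n2 m2 p k :: nat
    and ed1 ed2 :: "nat \<Rightarrow> nat \<times> nat" and sg1 sg2 :: "nat \<Rightarrow> int"
    and th1 th2 :: "nat \<Rightarrow> nat \<Rightarrow> int"
  assumes G1: "signed_graph n1 m1 ed1 sg1" and O1: "orientation m1 ed1 sg1 th1"
    and G2: "signed_graph n2 m2 ed2 sg2" and O2: "orientation m2 ed2 sg2 th2"
    and nc: "\<not> cospectral (S_adj n1 m1 ed1 th1) (S_adj n2 m2 ed2 th2)"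
    and ee: "equienergetic (S_adj n1 m1 ed1 th1) (S_adj n2 m2 ed2 th2)"
    and p: "1 \<le> p" and k: "k = p \<or> k = p - 1"
  shows "(\<not> cospectral (Sp_adj n1 m1 ed1 th1 p) (Sp_adj n2 m2 ed2 th2 p) \<and>
          equienergetic (Sp_adj n1 m1 ed1 th1 p) (Sp_adj n2 m2 ed2 th2 p)) \<and>
         (\<not> cospectral (Spk_adj n1 m1 ed1 th1 p k) (Spk_adj n2 m2 ed2 th2 p k) \<and>
          equienergetic (Spk_adj n1 m1 ed1 th1 p k) (Spk_adj n2 m2 ed2 th2 p k))"
proof -
  have nc': "\<not> cospectral (Spk_adj n1 m1 ed1 th1 0 0) (Spk_adj n2 m2 ed2 th2 0 0)"
    using nc unfolding S_as_Spk .
  have ee': "equienergetic (Spk_adj n1 m1 ed1 th1 0 0) (Spk_adj n2 m2 ed2 th2 0 0)"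
    using ee unfolding S_as_Spk .
  show ?thesis
    unfolding Sp_as_Spk[OF p]
    using GEN[OF G1 O1 G2 O2 nc' ee', where P=0 and K="p - 1"] GEN[OF G1 O1 G2 O2 nc' ee', where P=p and K=k]
    by blast
qed

end
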